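(* Let $(R,B)$ be an EIC problem with problem graph $G=(V,E)$ and sender neighborhoods $N_1,\dots,N_n$, and let $\mathscr C=\{V(C): C \text{ is a maximal clique in } G|_{N_i}\text{ for some } i\}$. For every cover $\mathcal C=\{C_j\}\subseteq\mathscr C$ of $V$, there is a neighborhood partition $(\tilde N_1,\dots,\tilde N_n)$ such that $$\sum_{C_j\in\mathcal C}\chi\big(\overline{G|_{C_j}}\big)\ge\sum_{i=1}^n\chi\big(\overline{G|_{\tilde N_i}}\big).$$
   Context: An EIC problem is a pair $(R,B)$ of matrices in $\mathbb{F}_2^{n\times m}$ with disjoint supports (node $u$ needs block $a$ iff $R_{ua}=1$, has it iff $B_{ua}=1$). $P=\{(u,a):R_{ua}=1\}$. The problem graph $G=(V,E)$ has vertices $V=\{v_{(u,a)}:(u,a)\in P\}$ and a directed edge from $v_{(u,a)}$ to $v_{(w,b)}$ iff $B_{ub}=1$ or $a=b$; $G|_S$ is the subgraph induced on $S$. Sender neighborhood of node $k$: $N_k=\{v_{(w,b)}\in V:B_{kb}=1\}$. A neighborhood partition is a tuple $(\tilde N_1,\dots,\tilde N_n)$ with $\tilde N_i\subseteq N_i$, pairwise disjoint, union $V$. For a directed graph $H$ (loops disregarded): $\overline H$ has edge $(x,y)$, $x\ne y$, iff $(x,y)\notin E(H)$; a clique is a vertex set in which every ordered pair of distinct vertices is an edge (maximal if not properly contained in another clique); an independent set contains no edge in either direction; $\chi(H)$ is the minimum number of independent sets partitioning the vertex set ($0$ if empty). A cover of $V$ by elements of $\mathscr C$ is a collection of members of $\mathscr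 C$ whose union is $V$. *)

theory Defs
  imports Main
begin

text \<open>EIC problem: n nodes, m blocks; matrices over F_2 represented as boolean
  functions on indices (u < n, a < m). Node indices are 0..n-1.\<close>

definition eic_problem :: "nat \<Rightarrow> nat \<Rightarrow> (nat \<Rightarrow> nat \<Rightarrow> bool) \<Rightarrow> (nat \<Rightarrow> nat \<Rightarrow> bool) \<Rightarrow> bool" where
  "eic_problem n m R B \<longleftrightarrow> (\<forall>u<n. \<forall>a<m. \<not> (R u a \<and> B u a))"

definition pg_vertices :: "nat \<Rightarrow> nat \<Rightarrow> (nat \<Rightarrow> nat \<Rightarrow> bool) \<Rightarrow> (nat \<times> nat) set" where
  "pg_vertices n m R = {(u, a). u < n \<and> a < m \<and> R u a}"

definition pg_edge :: "(nat \<Rightarrow> nat \<Rightarrow> bool) \<Rightarrow> nat \<times> nat \<Rightarrow> nat \<times> nat \<Rightarrow> bool" where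
  "pg_edge B x y \<longleftrightarrow> (case x of (u, a) \<Rightarrow> case y of (w, b) \<Rightarrow> B u b \<or> a = b)"

definition sender_nbhd :: "nat \<Rightarrow> nat \<Rightarrow> (nat \<Rightarrow> nat \<Rightarrow> bool) \<Rightarrow> (nat \<Rightarrow> nat \<Rightarrow> bool) \<Rightarrow> nat \<Rightarrow> (nat \<times> nat) set" where
  "sender_nbhd n m R B k = {v \<in> pg_vertices n m R. B k (snd v)}"

text \<open>A directed graph given by a vertex set S and edge relation E (loops disregarded).
  Induced subgraph on S' is (S', E).\<close>

definition compl_edge :: "('a \<Rightarrow> 'a \<Rightarrow> bool) \<Rightarrow> 'a \<Rightarrow> 'a \<Rightarrow> bool" where
  "compl_edge E x y \<longleftrightarrow> x \<noteq> y \<and> \<not> E x y"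

definition is_clique :: "('a \<Rightarrow> 'a \<Rightarrow> bool) \<Rightarrow> 'a set \<Rightarrow> 'a set \<Rightarrow> bool" where
  "is_clique E S C \<longleftrightarrow> C \<subseteq> S \<and> (\<forall>x\<in>C. \<forall>y\<in>C. x \<noteq> y \<longrightarrow> E x y)"

definition is_max_clique :: "('a \<Rightarrow> 'a \<Rightarrow> bool) \<Rightarrow> 'a set \<Rightarrow> 'a set \<Rightarrow> bool" where
  "is_max_clique E S C \<longleftrightarrow> is_clique E S C \<and> \<not> (\<exists>C'. is_clique E S C' \<and> C \<subset> C')"

definition is_indep :: "('a \<Rightarrow> 'a \<Rightarrow> bool) \<Rightarrow> 'a set \<Rightarrow> 'a set \<Rightarrow> bool" where
  "is_indep E S I \<longleftrightarrow> I \<subseteq> S \<and> (\<forall>x\<in>I. \<forall>y\<in>I. x \<noteq> y \<longrightarrow> \<not> E x y \<and> \<not> E y x)"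

definition chromatic :: "('a \<Rightarrow> 'a \<Rightarrow> bool) \<Rightarrow> 'a set \<Rightarrow> nat" where
  "chromatic E S = (LEAST k. \<exists>P. finite P \<and> card P = k \<and> \<Union>P = S \<and>
      (\<forall>I\<in>P. I \<noteq> {} \<and> is_indep E S I) \<and>
      (\<forall>I\<in>P. \<forall>J\<in>P. I \<noteq> J \<longrightarrow> I \<inter> J = {}))"

definition max_clique_family :: "nat \<Rightarrow> nat \<Rightarrow> (nat \<Rightarrow> nat \<Rightarrow> bool) \<Rightarrow> (nat \<Rightarrow> nat \<Rightarrow> bool) \<Rightarrow> (nat \<times> nat) set set" where
  "max_clique_family n m R B =
     {C. \<exists>i<n. is_max_clique (pg_edge B) (sender_nbhd n m R B i) C}"

definition nbhd_partition :: "nat \<Rightarrow> nat \<Rightarrow> (nat \<Rightarrow> nat \<Rightarrow> bool) \<Rightarrow> (nat \<Rightarrow> nat \<Rightarrow> bool) \<Rightarrow> (nat \<Rightarrow> (nat \<times> nat) set) \<Rightarrow> bool" where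
  "nbhd_partition n m R B Nt \<longleftrightarrow>
     (\<forall>i<n. Nt i \<subseteq> sender_nbhd n m R B i) \<and>
     (\<forall>i<n. \<forall>j<n. i \<noteq> j \<longrightarrow> Nt i \<inter> Nt j = {}) \<and>
     (\<Union>i<n. Nt i) = pg_vertices n m R"

end

theory Submission
  imports Defs
begin

lemma chrom_le:
  assumes "finite P" "\<Union>P = S" "\<forall>I\<in>P. I \<noteq> {} \<and> is_indep E S I"
    "\<forall>I\<in>P. \<forall>J\<in>P. I \<noteq> J \<longrightarrow> I \<inter> J = {}"
  shows "chromatic E S \<le> card P"
  unfolding chromatic_def by (rule Least_le) (use assms in blast)

lemma chrom_pos:
  assumes "C \<noteq> {}" "is_clique F X C"
  shows "1 \<le> chromatic (compl_edge F) C"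
proof -
  let ?Q = "\<lambda>k. \<exists>P. finite P \<and> card P = k \<and> \<Union>P = C \<and>
      (\<forall>I\<in>P. I \<noteq> {} \<and> is_indep (compl_edge F) C I) \<and>
      (\<forall>I\<in>P. \<forall>J\<in>P. I \<noteq> J \<longrightarrow> I \<inter> J = {})"
  have "?Q 1"
    apply (rule exI[of _ "{C}"])
    using assms by (auto simp: is_indep_def is_clique_def compl_edge_def)
  hence "?Q (Least ?Q)" by (rule LeastI)
  then obtain P where "finite P" "card P = Least ?Q" "\<Union>P = C" by blast
  with assms(1) have "card P \<noteq> 0" by auto
  thus ?thesis unfolding chromatic_def using \<open>card P = Least ?Q\<close> by simp
qed

theorem lemma7:
  fixes n m :: nat and R B :: "nat \<Rightarrow> nat \<Rightarrow> bool" and \<C> :: "(nat \<times> nat) set set"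
  assumes "eic_problem n m R B"
    and "\<C> \<subseteq> max_clique_family n m R B"
    and "\<Union>\<C> = pg_vertices n m R"
  shows "\<exists>Nt. nbhd_partition n m R B Nt \<and>
           (\<Sum>C\<in>\<C>. chromatic (compl_edge (pg_edge B)) C)
             \<ge> (\<Sum>i<n. chromatic (compl_edge (pg_edge B)) (Nt i))"
proof -
  define E where "E = pg_edge B"
  define V where "V = pg_vertices n m R"
  define N where "N = sender_nbhd n m R B"
  define cf where "cf v = (SOME C. C \<in> \<C> \<and> v \<in> C)" for v
  define idx where "idx C = (SOME i. i < n \<and> is_max_clique E (N i) C)" for C
  define Nt where "Nt i = {v\<in>V. idx (cf v) = i}" for i
  define pc where "pc C = {v\<in>V. cf v = C}" for C
  have finV: "finite V" unfolding V_def pg_vertices_def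
    by (rule finite_subset[of _ "{..<n} \<times> {..<m}"]) auto
  have finC: "finite \<C>"
  proof -
    have "\<C> \<subseteq> Pow V" using assms(3) unfolding V_def by blast
    thus ?thesis using finV by (simp add: finite_subset)
  qed
  have cf: "cf v \<in> \<C> \<and> v \<in> cf v" if "v \<in> V" for v
  proof -
    have "\<exists>C. C \<in> \<C> \<and> v \<in> C" using that assms(3) unfolding V_def by blast
    thus ?thesis unfolding cf_def by (rule someI_ex)
  qed
  have idx: "idx C < n \<and> is_max_clique E (N (idx C)) C" if "C \<in> \<C>" for C
  proof -
    have "\<exists>i. i < n \<and> is_max_clique E (N i) C"
      using that assms(2) unfolding max_clique_family_def E_def N_def by blast
    thus ?thesis unfolding idx_def by (rule someI_ex)
  qed
  have cl: "is_clique E (N (idx C)) C" if "C \<in> \<C>" for C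
    using idx[OF that] unfolding is_max_clique_def by blast
  define A where "A i = {C\<in>\<C>. C \<noteq> {} \<and> idx C = i}" for i
  have key: "chromatic (compl_edge E) (Nt i) \<le> card (A i)" for i
  proof -
    define P where "P = pc ` A i - {{}}"
    have finA: "finite (A i)" using finC unfolding A_def by auto
    have "chromatic (compl_edge E) (Nt i) \<le> card P"
    proof (rule chrom_le)
      show "finite P" using finA unfolding P_def by auto
      show "\<Union>P = Nt i"
      proof
        show "\<Union>P \<subseteq> Nt i" unfolding P_def pc_def Nt_def A_def by auto
        show "Nt i \<subseteq> \<Union>P"
        proof
          fix v assume v: "v \<in> Nt i"
          hence vV: "v \<in> V" and "idx (cf v) = i" unfolding Nt_def by auto
          with cf[OF vV] have "cf v \<in> A i" unfolding A_def by auto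
          moreover have "v \<in> pc (cf v)" using vV unfolding pc_def by auto
          ultimately show "v \<in> \<Union>P" unfolding P_def by blast
        qed
      qed
      show "\<forall>I\<in>P. I \<noteq> {} \<and> is_indep (compl_edge E) (Nt i) I"
      proof
        fix I assume "I \<in> P"
        then obtain C where C: "C \<in> A i" "I = pc C" "I \<noteq> {}" unfolding P_def by auto
        have CC: "C \<in> \<C>" using C unfolding A_def by auto
        have sub: "I \<subseteq> C" using C cf unfolding pc_def by auto
        have "I \<subseteq> Nt i"
        proof
          fix v assume "v \<in> I"
          hence "v \<in> V" "cf v = C" using C(2) unfolding pc_def by auto
          moreover have "idx C = i" using C(1) unfolding A_def by simp
          ultimately show "v \<in> Nt i" unfolding Nt_def by simp
        qed
        moreover have "\<forall>x\<in>I. \<forall>y\<in>I. x \<noteq> y \<longrightarrow> E x y \<and> E y x"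
        proof (intro ballI impI)
          fix x y assume "x \<in> I" "y \<in> I" "x \<noteq> y"
          hence "x \<in> C" "y \<in> C" using sub by auto
          with \<open>x \<noteq> y\<close> cl[OF CC] show "E x y \<and> E y x" unfolding is_clique_def by metis
        qed
        ultimately show "I \<noteq> {} \<and> is_indep (compl_edge E) (Nt i) I"
          using C unfolding is_indep_def compl_edge_def by blast
      qed
      show "\<forall>I\<in>P. \<forall>J\<in>P. I \<noteq> J \<longrightarrow> I \<inter> J = {}"
      proof (intro ballI impI)
        fix I J assume "I \<in> P" "J \<in> P" "I \<noteq> J"
        then obtain C D where "I = pc C" "J = pc D" unfolding P_def by blast
        with \<open>I \<noteq> J\<close> show "I \<inter> J = {}" unfolding pc_def by auto
      qed
    qed
    also have "card P \<le> card (pc ` A i)" unfolding P_def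
      using finA by (intro card_mono) auto
    also have "\<dots> \<le> card (A i)" using finA by (rule card_image_le)
    finally show ?thesis .
  qed
  define A0 where "A0 = {C\<in>\<C>. C \<noteq> {}}"
  have finA0: "finite A0" using finC unfolding A0_def by auto
  have "(\<Sum>i<n. chromatic (compl_edge E) (Nt i)) \<le> (\<Sum>i<n. card (A i))"
    by (rule sum_mono) (rule key)
  also have "(\<Sum>i<n. card (A i)) = (\<Sum>i<n. \<Sum>C\<in>{C\<in>A0. idx C = i}. (1::nat))"
  proof (rule sum.cong[OF refl])
    fix i
    have "A i = {C\<in>A0. idx C = i}" unfolding A_def A0_def by blast
    thus "card (A i) = (\<Sum>C\<in>{C\<in>A0. idx C = i}. (1::nat))" by simp
  qed
  also have "\<dots> = (\<Sum>C\<in>A0. (1::nat))"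
  proof (rule sum.group[OF finA0])
    show "finite {..<n}" by simp
    show "idx ` A0 \<subseteq> {..<n}"
    proof
      fix x assume "x \<in> idx ` A0"
      then obtain C where "C \<in> \<C>" "x = idx C" unfolding A0_def by blast
      thus "x \<in> {..<n}" using idx[of C] by simp
    qed
  qed
  also have "\<dots> \<le> (\<Sum>C\<in>A0. chromatic (compl_edge E) C)"
  proof (rule sum_mono)
    fix C assume "C \<in> A0"
    hence "C \<noteq> {}" "C \<in> \<C>" unfolding A0_def by auto
    thus "1 \<le> chromatic (compl_edge E) C" using chrom_pos[OF _ cl[of C]] by blast
  qed
  also have "\<dots> \<le> (\<Sum>C\<in>\<C>. chromatic (compl_edge E) C)"
    by (rule sum_mono2[OF finC]) (auto simp: A0_def)
  finally have ineq: "(\<Sum>i<n. chromatic (compl_edge E) (Nt i)) \<le> (\<Sum>C\<in>\<C>. chromatic (compl_edge E) C)" .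
  have part: "nbhd_partition n m R B Nt"
    unfolding nbhd_partition_def
  proof (intro conjI allI impI)
    fix i assume "i < n"
    show "Nt i \<subseteq> sender_nbhd n m R B i"
    proof
      fix v assume v: "v \<in> Nt i"
      hence vV: "v \<in> V" and "idx (cf v) = i" unfolding Nt_def by auto
      thus "v \<in> sender_nbhd n m R B i"
        using cf[OF vV] cl[of "cf v"] unfolding is_clique_def N_def by auto
    qed
  next
    fix i j assume "i < n" "j < n" "i \<noteq> j"
    thus "Nt i \<inter> Nt j = {}" unfolding Nt_def by auto
  next
    show "(\<Union>i<n. Nt i) = pg_vertices n m R"
      using cf idx unfolding Nt_def V_def by fastforce
  qed
  show ?thesis using part ineq unfolding E_def by blast
qed

end
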